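(* Let $n,m\in\mathbb N$ with $n<m$, and let $\mathbb P^T_n=\{p^{(k)}_n:k\in\mathbb N\}$, $\mathbb P^T_m=\{p^{(k)}_m:k\in\mathbb N\}$. Then $\mathbb P^T_n\cap\mathbb P^T_m\neq\emptyset$ if and only if $m\in\mathbb P^T_n$. Moreover, if $m\in\mathbb P^T_n$, say $m=p^{(k)}_n$, then $\mathbb P^T_m\subset\mathbb P^T_n$ and $\mathbb P^T_n\setminus\mathbb P^T_m=\{p^{(1)}_n,p^{(2)}_n,\dots,p^{(k)}_n\}$.
   Context: Let $p_n$ denote the $n$-th prime number. Define $p^{(0)}_n=n$ and recursively $p^{(k+1)}_n=p_{p^{(k)}_n}$ for $k\in\mathbb N_0$. *)

theory Defs
  imports "HOL-Computational_Algebra.Primes" "HOL-Library.Infinite_Set"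
begin

text \<open>The n-th prime, 1-indexed: nth_prime 1 = 2, nth_prime 2 = 3, ...
  (the value at 0 is irrelevant).\<close>
definition nth_prime :: "nat \<Rightarrow> nat" where
  "nth_prime n = enumerate {p::nat. prime p} (n - 1)"

definition PT :: "nat \<Rightarrow> nat set" where
  "PT n = {(nth_prime ^^ k) n | k. k \<ge> 1}"

end

theory Submission
  imports Defs
begin

lemma enum_ge: "enumerate {p::nat. prime p} i \<ge> i + 2"
proof (induction i)
  case 0
  have "prime (enumerate {p::nat. prime p} 0)"
    using enumerate_in_set[OF primes_infinite] by simp
  then have "enumerate {p::nat. prime p} 0 \<ge> 2" by (rule prime_ge_2_nat)
  then show ?case by simp
next
  case (Suc i)
  have "enumerate {p::nat. prime p} i < enumerate {p::nat. prime p} (Suc i)"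
    using enumerate_step[OF primes_infinite] by simp
  then show ?case using Suc by simp
qed

lemma np_gt: "nth_prime x > x"
  using enum_ge[of "x - 1"] unfolding nth_prime_def by simp

lemma np_strict: "1 \<le> x \<Longrightarrow> x < y \<Longrightarrow> nth_prime x < nth_prime y"
  unfolding nth_prime_def using enumerate_mono[OF _ primes_infinite, of "x - 1" "y - 1"] by simp

lemma np_inj: "1 \<le> x \<Longrightarrow> 1 \<le> y \<Longrightarrow> nth_prime x = nth_prime y \<Longrightarrow> x = y"
  by (metis linorder_neq_iff np_strict less_irrefl)

lemma iter_ge: "(nth_prime ^^ k) x \<ge> x + k"
proof (induction k)
  case 0 then show ?case by simp
next
  case (Suc k) then show ?case using np_gt[of "(nth_prime ^^ k) x"] by simp
qed

lemma iter_inj: "1 \<le> x \<Longrightarrow> 1 \<le> y \<Longrightarrow> (nth_prime ^^ k) x = (nth_prime ^^ k) y \<Longrightarrow> x = y"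
proof (induction k)
  case 0 then show ?case by simp
next
  case (Suc k)
  have "1 \<le> (nth_prime ^^ k) x" "1 \<le> (nth_prime ^^ k) y"
    using iter_ge[of x k] iter_ge[of y k] Suc.prems by auto
  then have "(nth_prime ^^ k) x = (nth_prime ^^ k) y" using np_inj Suc.prems by simp
  then show ?case using Suc by simp
qed

lemma iter_add: "(nth_prime ^^ (a + d)) x = (nth_prime ^^ a) ((nth_prime ^^ d) x)"
  by (simp add: funpow_add)

lemma iter_strict: "1 \<le> x \<Longrightarrow> a < b \<Longrightarrow> (nth_prime ^^ a) x < (nth_prime ^^ b) x"
proof -
  assume a: "1 \<le> x" "a < b"
  then obtain d where d: "b = d + a" "d \<ge> 1" by (metis add.commute less_imp_add_positive less_eq_Suc_le One_nat_def)
  have "(nth_prime ^^ b) x = (nth_prime ^^ d) ((nth_prime ^^ a) x)" using d iter_add by simp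
  also have "\<dots> \<ge> (nth_prime ^^ a) x + d" by (rule iter_ge)
  finally show ?thesis using d by simp
qed

lemma iter_inj_k: "1 \<le> x \<Longrightarrow> (nth_prime ^^ a) x = (nth_prime ^^ b) x \<Longrightarrow> a = b"
  by (metis iter_strict less_irrefl linorder_neq_iff)

theorem theorem5:
  fixes n m :: nat
  assumes "1 \<le> n" and "n < m"
  shows "(PT n \<inter> PT m \<noteq> {} \<longleftrightarrow> m \<in> PT n) \<and>
         (\<forall>k\<ge>1. m = (nth_prime ^^ k) n \<longrightarrow>
            PT m \<subset> PT n \<and>
            PT n - PT m = {(nth_prime ^^ j) n | j. 1 \<le> j \<and> j \<le> k})"
proof (intro conjI allI impI)
  have m1: "1 \<le> m" using assms by simp
  show "PT n \<inter> PT m \<noteq> {} \<longleftrightarrow> m \<in> PT n"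
  proof
    assume "PT n \<inter> PT m \<noteq> {}"
    then obtain a b where ab: "a \<ge> 1" "b \<ge> 1" "(nth_prime ^^ a) n = (nth_prime ^^ b) m"
      unfolding PT_def by auto
    show "m \<in> PT n"
    proof (cases "b \<le> a")
      case True
      then obtain d where d: "a = b + d" using le_Suc_ex by blast
      have "(nth_prime ^^ b) ((nth_prime ^^ d) n) = (nth_prime ^^ b) m"
        using ab d iter_add by simp
      then have e: "(nth_prime ^^ d) n = m"
        using iter_inj[of "(nth_prime ^^ d) n" m b] iter_ge[of n d] assms by simp
      then have "d \<noteq> 0" using assms by (cases d) auto
      then have "\<exists>j. m = (nth_prime ^^ j) n \<and> 1 \<le> j" using e by (rule_tac x=d in exI) simp
      then show ?thesis unfolding PT_def by simp
    next
      case False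
      then obtain d where d: "b = a + d" "d \<ge> 1"
        by (metis add.commute less_imp_add_positive not_le less_eq_Suc_le One_nat_def)
      have "(nth_prime ^^ a) n = (nth_prime ^^ a) ((nth_prime ^^ d) m)"
        using ab d iter_add by simp
      then have e: "n = (nth_prime ^^ d) m"
        using iter_inj[of n "(nth_prime ^^ d) m" a] iter_ge[of m d] assms by simp
      then show ?thesis using iter_ge[of m d] assms d by simp
    qed
  next
    assume "m \<in> PT n"
    then obtain k where k: "k \<ge> 1" "m = (nth_prime ^^ k) n" unfolding PT_def by auto
    have "nth_prime m = (nth_prime ^^ (Suc k)) n" using k by simp
    moreover have "nth_prime m = (nth_prime ^^ 1) m" by simp
    have h1: "1 \<le> Suc k" by simp
    have "\<exists>j. nth_prime m = (nth_prime ^^ j) n \<and> 1 \<le> j"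
      using h1 \<open>nth_prime m = (nth_prime ^^ (Suc k)) n\<close> by (rule_tac x="Suc k" in exI) simp
    then have "nth_prime m \<in> PT n" unfolding PT_def by simp
    moreover have "\<exists>j. nth_prime m = (nth_prime ^^ j) m \<and> 1 \<le> j"
      by (rule_tac x="1" in exI) simp
    then have "nth_prime m \<in> PT m" unfolding PT_def by simp
    ultimately have "nth_prime m \<in> PT n \<inter> PT m" by blast
    then show "PT n \<inter> PT m \<noteq> {}" by blast
  qed
next
  fix k :: nat
  assume k: "1 \<le> k" "m = (nth_prime ^^ k) n"
  have PTm: "PT m = {(nth_prime ^^ i) n | i. k + 1 \<le> i}"
  proof -
    have "PT m = {(nth_prime ^^ (j + k)) n | j. j \<ge> 1}"
      unfolding PT_def using k by (simp add: funpow_add)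
    also have "\<dots> = {(nth_prime ^^ i) n | i. k + 1 \<le> i}"
    proof (intro set_eqI iffI)
      fix x assume "x \<in> {(nth_prime ^^ (j + k)) n | j. j \<ge> 1}"
      then obtain j where "j \<ge> 1" "x = (nth_prime ^^ (j + k)) n" by auto
      then show "x \<in> {(nth_prime ^^ i) n | i. k + 1 \<le> i}"
        by (intro CollectI, rule_tac x="j + k" in exI) simp
    next
      fix x assume "x \<in> {(nth_prime ^^ i) n | i. k + 1 \<le> i}"
      then obtain i where i: "k + 1 \<le> i" "x = (nth_prime ^^ i) n" by auto
      then have "i = (i - k) + k" "i - k \<ge> 1" by auto
      then show "x \<in> {(nth_prime ^^ (j + k)) n | j. j \<ge> 1}" using i
        by (intro CollectI, rule_tac x="i - k" in exI) simp
    qed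
    finally show ?thesis .
  qed
  have mem: "x \<in> PT m \<longleftrightarrow> (\<exists>i. k + 1 \<le> i \<and> x = (nth_prime ^^ i) n)" for x
    using PTm by auto
  have memn: "x \<in> PT n \<longleftrightarrow> (\<exists>i. 1 \<le> i \<and> x = (nth_prime ^^ i) n)" for x
    unfolding PT_def by auto
  have sub: "PT m \<subseteq> PT n"
  proof
    fix x assume "x \<in> PT m"
    then obtain i where "k + 1 \<le> i" "x = (nth_prime ^^ i) n" using mem by auto
    then have "\<exists>i. 1 \<le> i \<and> x = (nth_prime ^^ i) n" by (rule_tac x=i in exI) simp
    then show "x \<in> PT n" using memn by simp
  qed
  have "\<exists>i. 1 \<le> i \<and> nth_prime n = (nth_prime ^^ i) n" by (rule_tac x=1 in exI) simp
  then have "nth_prime n \<in> PT n" using memn by simp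
  moreover have "nth_prime n \<notin> PT m"
  proof
    assume "nth_prime n \<in> PT m"
    then obtain i where "k + 1 \<le> i" "nth_prime n = (nth_prime ^^ i) n" using mem by auto
    moreover then have "(nth_prime ^^ 1) n = (nth_prime ^^ i) n" by simp
    ultimately show False using iter_inj_k[OF assms(1)] k by fastforce
  qed
  ultimately show "PT m \<subset> PT n" using sub by blast
  show "PT n - PT m = {(nth_prime ^^ j) n | j. 1 \<le> j \<and> j \<le> k}"
  proof (intro set_eqI iffI)
    fix x assume "x \<in> PT n - PT m"
    then obtain i where i: "1 \<le> i" "x = (nth_prime ^^ i) n" "x \<notin> PT m" using memn by auto
    then have "i \<le> k" using mem by (metis not_less_eq_eq Suc_eq_plus1)
    then show "x \<in> {(nth_prime ^^ j) n | j. 1 \<le> j \<and> j \<le> k}" using i by auto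
  next
    fix x assume "x \<in> {(nth_prime ^^ j) n | j. 1 \<le> j \<and> j \<le> k}"
    then obtain j where j: "1 \<le> j" "j \<le> k" "x = (nth_prime ^^ j) n" by auto
    have "x \<notin> PT m"
    proof
      assume "x \<in> PT m"
      then obtain i where "k + 1 \<le> i" "x = (nth_prime ^^ i) n" using mem by auto
      then show False using j iter_inj_k[OF assms(1), of j i] by simp
    qed
    then show "x \<in> PT n - PT m" using j memn by auto
  qed
qed

end
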